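(* Let $I:(0,1)\to(0,1)$ be an increasing bijection satisfying $I(2t)\approx I(t)$ for $t\in(0,\frac12)$, and let $S$ be a sublinear operator defined on $m_I$ (with values in measurable functions on $(0,1)$). If $S$ is bounded on $L^\infty$ and on $m_I$, then $$(Sf)^*(t)\lesssim (S_If)(t),\quad t\in(0,1),$$ for every nonnegative $f\in m_I$. If, in addition, $\int_0^t\frac{ds}{I(s)}\lesssim\frac{t}{I(t)}$ for $t\in(0,1)$, then $$(Sf)^{**}(t)\lesssim(S_If)(t)\quad\text{and}\quad (S_If)^{**}(t)\lesssim(S_If)(t),\quad t\in(0,1),$$ for every nonnegative $f\in m_I$. In particular, for an r.i. space $X\subset m_I$ we have $X\in\mathrm{Int}(L^\infty,m_I)$ whenever $S_I$ is bounded on $X$.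
   Context: $f^*$ is the nonincreasing rearrangement on $(0,1)$, $f^{**}(t)=\frac1t\int_0^tf^*$. $\|f\|_{m_I}=\sup_{0<t<1}I(t)f^*(t)$, $m_I$ the functions with finite quasinorm. $S_If(t)=\frac1{I(t)}\sup_{0<s\le t}I(s)f^*(s)$ (which is $\equiv\infty$ if $f\notin m_I$). An operator is bounded on a (quasi-)normed space $X$ if $\|Tf\|_X\lesssim\|f\|_X$. An r.i. space is a rearrangement-invariant Banach function space on $(0,1)$. $X\in\mathrm{Int}(L^\infty,m_I)$ means $L^\infty\subset X\subset m_I$ and every linear operator bounded on both $L^\infty$ and $m_I$ is bounded on $X$. $\lesssim$, $\approx$ denote inequalities up to constants independent of $f$ and $t$. *)

theory Defs
  imports "HOL-Analysis.Analysis"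
begin

(* Underlying measure space: (0,1) with Lebesgue measure. Functions are real-valued
   functions of a real variable; only their values on (0,1) matter. *)
abbreviation M01 :: "real measure" where
  "M01 \<equiv> lebesgue_on {0<..<1::real}"

definition distr_fun :: "(real \<Rightarrow> real) \<Rightarrow> real \<Rightarrow> real" where
  "distr_fun f s = measure lebesgue {x \<in> {0<..<1}. s < \<bar>f x\<bar>}"

definition rearr :: "(real \<Rightarrow> real) \<Rightarrow> real \<Rightarrow> real" where
  "rearr f t = Inf {s. 0 \<le> s \<and> distr_fun f s \<le> t}"

definition rearr_max :: "(real \<Rightarrow> real) \<Rightarrow> real \<Rightarrow> ennreal" where
  "rearr_max f t = (\<integral>\<^sup>+ s \<in> {0<..<t}. ennreal (rearr f s) \<partial>lborel) / ennreal t"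

definition mI_norm :: "(real \<Rightarrow> real) \<Rightarrow> (real \<Rightarrow> real) \<Rightarrow> ennreal" where
  "mI_norm I f = (SUP t\<in>{0<..<1}. ennreal (I t * rearr f t))"

definition mI :: "(real \<Rightarrow> real) \<Rightarrow> (real \<Rightarrow> real) set" where
  "mI I = {f \<in> borel_measurable M01. mI_norm I f < \<infinity>}"

(* S_I f(t) = (1/I(t)) sup_{0<s<=t} I(s) f^*(s)   (finite for f in m_I) *)
definition SI :: "(real \<Rightarrow> real) \<Rightarrow> (real \<Rightarrow> real) \<Rightarrow> real \<Rightarrow> real" where
  "SI I f t = (SUP s\<in>{0<..t}. I s * rearr f s) / I t"

definition Linf_norm :: "(real \<Rightarrow> real) \<Rightarrow> ennreal" where
  "Linf_norm f = (INF C\<in>{C::real. 0 \<le> C \<and> (AE x in M01. \<bar>f x\<bar> \<le> C)}. ennreal C)"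

definition Linf :: "(real \<Rightarrow> real) set" where
  "Linf = {f \<in> borel_measurable M01. Linf_norm f < \<infinity>}"

definition bounded_on ::
  "((real \<Rightarrow> real) \<Rightarrow> ennreal) \<Rightarrow> (real \<Rightarrow> real) set \<Rightarrow>
   ((real \<Rightarrow> real) \<Rightarrow> (real \<Rightarrow> real)) \<Rightarrow> bool" where
  "bounded_on N V T \<longleftrightarrow> (\<exists>C. \<forall>f\<in>V. T f \<in> V \<and> N (T f) \<le> ennreal C * N f)"

definition sublinear_on_mI ::
  "(real \<Rightarrow> real) \<Rightarrow> ((real \<Rightarrow> real) \<Rightarrow> (real \<Rightarrow> real)) \<Rightarrow> bool" where
  "sublinear_on_mI I S \<longleftrightarrow>
     (\<forall>f\<in>mI I. S f \<in> borel_measurable M01) \<and>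
     (\<forall>f\<in>mI I. \<forall>g\<in>mI I. AE x in M01. \<bar>S (\<lambda>y. f y + g y) x\<bar> \<le> \<bar>S f x\<bar> + \<bar>S g x\<bar>) \<and>
     (\<forall>f\<in>mI I. \<forall>a::real. AE x in M01. \<bar>S (\<lambda>y. a * f y) x\<bar> = \<bar>a\<bar> * \<bar>S f x\<bar>)"

definition linear_on_mI ::
  "(real \<Rightarrow> real) \<Rightarrow> ((real \<Rightarrow> real) \<Rightarrow> (real \<Rightarrow> real)) \<Rightarrow> bool" where
  "linear_on_mI I T \<longleftrightarrow>
     (\<forall>f\<in>mI I. T f \<in> borel_measurable M01) \<and>
     (\<forall>f\<in>mI I. \<forall>g\<in>mI I. \<forall>a b::real.
        AE x in M01. T (\<lambda>y. a * f y + b * g y) x = a * T f x + b * T g x)"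

definition NNmeas :: "(real \<Rightarrow> real) set" where
  "NNmeas = {f \<in> borel_measurable M01. \<forall>x\<in>{0<..<1}. 0 \<le> f x}"

(* Banach function norm (Bennett--Sharpley, Def. I.1.1, axioms P1--P5) on (0,1),
   given on nonnegative measurable functions *)
definition function_norm :: "((real \<Rightarrow> real) \<Rightarrow> ennreal) \<Rightarrow> bool" where
  "function_norm \<rho> \<longleftrightarrow>
     (\<forall>f\<in>NNmeas. \<rho> f = 0 \<longleftrightarrow> (AE x in M01. f x = 0)) \<and>
     (\<forall>f\<in>NNmeas. \<forall>a::real. 0 \<le> a \<longrightarrow> \<rho> (\<lambda>x. a * f x) = ennreal a * \<rho> f) \<and>
     (\<forall>f\<in>NNmeas. \<forall>g\<in>NNmeas. \<rho> (\<lambda>x. f x + g x) \<le> \<rho> f + \<rho> g) \<and>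
     (\<forall>f\<in>NNmeas. \<forall>g\<in>NNmeas. (AE x in M01. g x \<le> f x) \<longrightarrow> \<rho> g \<le> \<rho> f) \<and>
     (\<forall>F f. (\<forall>n. F n \<in> NNmeas) \<and> f \<in> NNmeas \<and>
            (AE x in M01. incseq (\<lambda>n. F n x) \<and> (\<lambda>n. F n x) \<longlonglongrightarrow> f x)
            \<longrightarrow> (\<lambda>n. \<rho> (F n)) \<longlonglongrightarrow> \<rho> f) \<and>
     (\<forall>E\<in>sets M01. \<rho> (indicator E) < \<infinity>) \<and>
     (\<forall>E\<in>sets M01. \<exists>C::real. \<forall>f\<in>NNmeas.
        (\<integral>\<^sup>+ x \<in> E. ennreal (f x) \<partial>M01) \<le> ennreal C * \<rho> f)"

definition ri_norm :: "((real \<Rightarrow> real) \<Rightarrow> ennreal) \<Rightarrow> bool" where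
  "ri_norm \<rho> \<longleftrightarrow> function_norm \<rho> \<and>
     (\<forall>f\<in>NNmeas. \<forall>g\<in>NNmeas. (\<forall>s\<ge>0. distr_fun f s = distr_fun g s) \<longrightarrow> \<rho> f = \<rho> g)"

definition Xnorm :: "((real \<Rightarrow> real) \<Rightarrow> ennreal) \<Rightarrow> (real \<Rightarrow> real) \<Rightarrow> ennreal" where
  "Xnorm \<rho> f = \<rho> (\<lambda>x. \<bar>f x\<bar>)"

definition Xspace :: "((real \<Rightarrow> real) \<Rightarrow> ennreal) \<Rightarrow> (real \<Rightarrow> real) set" where
  "Xspace \<rho> = {f \<in> borel_measurable M01. Xnorm \<rho> f < \<infinity>}"

definition Int_Linf_mI :: "(real \<Rightarrow> real) \<Rightarrow> ((real \<Rightarrow> real) \<Rightarrow> ennreal) \<Rightarrow> bool" where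
  "Int_Linf_mI I \<rho> \<longleftrightarrow> Linf \<subseteq> Xspace \<rho> \<and> Xspace \<rho> \<subseteq> mI I \<and>
     (\<forall>T. linear_on_mI I T \<and> bounded_on Linf_norm Linf T \<and> bounded_on (mI_norm I) (mI I) T
          \<longrightarrow> bounded_on (Xnorm \<rho>) (Xspace \<rho>) T)"

end

theory Submission
  imports Defs
begin


lemma M01_fin: "finite_measure M01"
  by (rule finite_measure_lebesgue_on) auto

lemma space_M01[simp]: "space M01 = {0<..<1}" by simp

lemma measure_M01_Ioo: "0 \<le> a \<Longrightarrow> a \<le> b \<Longrightarrow> b \<le> 1 \<Longrightarrow> measure M01 {a<..<b} = b - a"
  by (subst measure_restrict_space) auto

lemma distr_M01: "distr_fun f s = measure M01 {x\<in>{0<..<1}. s < \<bar>f x\<bar>}"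
  unfolding distr_fun_def by (subst measure_restrict_space) auto

lemma distr_nonneg: "0 \<le> distr_fun f s" unfolding distr_fun_def by simp

lemma distr_le1: "distr_fun f s \<le> 1"
proof -
  have "distr_fun f s \<le> measure M01 (space M01)"
    unfolding distr_M01 by (rule finite_measure.bounded_measure[OF M01_fin])
  also have "\<dots> = 1" using measure_M01_Ioo[of 0 1] by simp
  finally show ?thesis .
qed

lemma distr_le_set:
  assumes "{x\<in>{0<..<1}. s < \<bar>g x\<bar>} \<subseteq> B" "B \<in> sets M01"
  shows "distr_fun g s \<le> measure M01 B"
proof (cases "{x\<in>{0<..<1}. s < \<bar>g x\<bar>} \<in> sets M01")
  case True
  then show ?thesis unfolding distr_M01
    using finite_measure.finite_measure_mono[OF M01_fin assms(1) assms(2)] by simp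
next
  case False
  then show ?thesis unfolding distr_M01 by (simp add: measure_notin_sets)
qed

lemma sets_level:
  fixes g :: "real \<Rightarrow> real"
  assumes "g \<in> borel_measurable M01"
  shows "{x\<in>{0<..<1}. s < \<bar>g x\<bar>} \<in> sets M01"
proof -
  have m: "(\<lambda>x. \<bar>g x\<bar>) \<in> borel_measurable M01" using assms by (rule borel_measurable_abs)
  have "(\<lambda>x. \<bar>g x\<bar>) -` {s<..} \<inter> space M01 \<in> sets M01" by (rule measurable_sets[OF m]) auto
  moreover have "(\<lambda>x. \<bar>g x\<bar>) -` {s<..} \<inter> space M01 = {x\<in>{0<..<1}. s < \<bar>g x\<bar>}" by auto
  ultimately show ?thesis by simp
qed

lemma distr_antimono:
  assumes "g \<in> borel_measurable M01" "s \<le> s'"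
  shows "distr_fun g s' \<le> distr_fun g s"
  unfolding distr_M01[of g s]
  by (rule distr_le_set[OF _ sets_level[OF assms(1)]]) (use assms in auto)

lemma rearr_set_nonempty:
  fixes g :: "real \<Rightarrow> real"
  assumes g: "g \<in> borel_measurable M01" and t: "0 < t"
  shows "\<exists>s\<ge>0. distr_fun g s \<le> t"
proof -
  define A where "A n = {x\<in>{0<..<1}. real n < \<bar>g x\<bar>}" for n
  have rA: "range A \<subseteq> sets M01" using sets_level[OF g] by (auto simp: A_def)
  have dA: "decseq A" unfolding A_def decseq_def by auto
  have "(\<Inter>i. A i) = {}"
  proof (rule ccontr)
    assume "(\<Inter>i. A i) \<noteq> {}"
    then obtain x where "\<forall>i. x \<in> A i" by auto
    moreover obtain n where "\<bar>g x\<bar> < real n" using reals_Archimedean2 by blast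
    ultimately have "real n < \<bar>g x\<bar>" "\<bar>g x\<bar> < real n" unfolding A_def by auto
    then show False by simp
  qed
  moreover have "(\<lambda>n. measure M01 (A n)) \<longlonglongrightarrow> measure M01 (\<Inter>i. A i)"
    by (rule Lim_measure_decseq[OF rA dA]) (simp add: finite_measure.emeasure_finite[OF M01_fin])
  ultimately have "(\<lambda>n. measure M01 (A n)) \<longlonglongrightarrow> 0" by simp
  then obtain n where "measure M01 (A n) < t" using t
    by (metis (no_types, lifting) LIMSEQ_le_const not_le order.refl)
  then have "distr_fun g (real n) \<le> t" unfolding distr_M01 A_def by simp
  then show ?thesis by (intro exI[of _ "real n"]) auto
qed

lemma rearr_le:
  assumes "0 \<le> s" "distr_fun g s \<le> t"
  shows "rearr g t \<le> s"
  unfolding rearr_def by (rule cInf_lower) (use assms in \<open>auto intro: bdd_belowI[of _ 0]\<close>)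

lemma rearr_props:
  fixes g :: "real \<Rightarrow> real"
  assumes g: "g \<in> borel_measurable M01" and t: "0 < t"
  shows "0 \<le> rearr g t" "distr_fun g (rearr g t) \<le> t"
proof -
  define S where "S = {s. 0 \<le> s \<and> distr_fun g s \<le> t}"
  have ne: "S \<noteq> {}" using rearr_set_nonempty[OF g t] by (auto simp: S_def)
  have bdd: "bdd_below S" by (rule bdd_belowI[of _ 0]) (auto simp: S_def)
  have r: "rearr g t = Inf S" unfolding rearr_def S_def ..
  show r0: "0 \<le> rearr g t" unfolding r by (rule cInf_greatest[OF ne]) (auto simp: S_def)
  define r0 where "r0 = rearr g t"
  have step: "distr_fun g (r0 + 1 / Suc n) \<le> t" for n
  proof -
    have "Inf S < r0 + 1 / Suc n" unfolding r0_def r by simp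
    then obtain s where s: "s \<in> S" "s < r0 + 1 / Suc n" using cInf_lessD[OF ne] by blast
    then have "distr_fun g (r0 + 1 / Suc n) \<le> distr_fun g s" by (intro distr_antimono[OF g]) auto
    also have "\<dots> \<le> t" using s by (auto simp: S_def)
    finally show ?thesis .
  qed
  define B where "B n = {x\<in>{0<..<1}. r0 + 1 / Suc n < \<bar>g x\<bar>}" for n
  have rB: "range B \<subseteq> sets M01" using sets_level[OF g] by (auto simp: B_def)
  have iB: "incseq B"
  proof (rule incseq_SucI)
    fix n
    have "1 / real (Suc (Suc n)) \<le> 1 / Suc n" by (simp add: frac_le)
    then show "B n \<subseteq> B (Suc n)" unfolding B_def by auto
  qed
  have U: "(\<Union>i. B i) = {x\<in>{0<..<1}. r0 < \<bar>g x\<bar>}"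
  proof
    show "(\<Union>i. B i) \<subseteq> {x\<in>{0<..<1}. r0 < \<bar>g x\<bar>}" unfolding B_def
      by auto (smt (verit) of_nat_0_le_iff divide_nonneg_nonneg)
  next
    show "{x\<in>{0<..<1}. r0 < \<bar>g x\<bar>} \<subseteq> (\<Union>i. B i)"
    proof
      fix x assume x: "x \<in> {x\<in>{0<..<1}. r0 < \<bar>g x\<bar>}"
      then have "0 < \<bar>g x\<bar> - r0" by auto
      then obtain n where "1 / real (Suc n) < \<bar>g x\<bar> - r0" using nat_approx_posE by blast
      then have "x \<in> B n" using x unfolding B_def by auto
      then show "x \<in> (\<Union>i. B i)" by blast
    qed
  qed
  have "(\<lambda>n. measure M01 (B n)) \<longlonglongrightarrow> measure M01 (\<Union>i. B i)"
    by (rule Lim_measure_incseq[OF rB iB]) (simp add: finite_measure.emeasure_finite[OF M01_fin])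
  moreover have "measure M01 (B n) \<le> t" for n using step[of n] unfolding distr_M01 B_def by simp
  ultimately have "measure M01 (\<Union>i. B i) \<le> t" by (intro LIMSEQ_le_const2) auto
  then show "distr_fun g (rearr g t) \<le> t" unfolding distr_M01 U r0_def[symmetric] .
qed

lemma rearr_antimono:
  fixes g :: "real \<Rightarrow> real"
  assumes g: "g \<in> borel_measurable M01" and t: "0 < t" "t \<le> t'"
  shows "rearr g t' \<le> rearr g t"
  using rearr_props[OF g t(1)] t by (intro rearr_le) auto

lemma rearr_gt_iff:
  fixes g :: "real \<Rightarrow> real"
  assumes g: "g \<in> borel_measurable M01" and t: "0 < t" and s: "0 \<le> s"
  shows "s < rearr g t \<longleftrightarrow> t < distr_fun g s"
proof
  assume "s < rearr g t"
  then show "t < distr_fun g s" using rearr_le[OF s, of g t] by linarith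
next
  assume a: "t < distr_fun g s"
  show "s < rearr g t"
  proof (rule ccontr)
    assume "\<not> s < rearr g t"
    then have "distr_fun g s \<le> distr_fun g (rearr g t)" by (intro distr_antimono[OF g]) auto
    with rearr_props(2)[OF g t] a show False by linarith
  qed
qed



lemma M01_subadd: "A \<in> sets M01 \<Longrightarrow> B \<in> sets M01 \<Longrightarrow> measure M01 (A \<union> B) \<le> measure M01 A + measure M01 B"
  by (rule measure_subadditive) (auto simp: finite_measure.emeasure_finite[OF M01_fin])

lemma rearr_sum:
  fixes u v w :: "real \<Rightarrow> real"
  assumes u: "u \<in> borel_measurable M01" and v: "v \<in> borel_measurable M01"
    and ae: "AE x in M01. \<bar>w x\<bar> \<le> \<bar>u x\<bar> + \<bar>v x\<bar>" and t: "0 < t"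
  shows "rearr w t \<le> rearr u (t/2) + rearr v (t/2)"
proof -
  have t2: "0 < t/2" using t by simp
  define a where "a = rearr u (t/2)"
  define b where "b = rearr v (t/2)"
  have a: "0 \<le> a" "distr_fun u a \<le> t/2" using rearr_props[OF u t2] by (auto simp: a_def)
  have b: "0 \<le> b" "distr_fun v b \<le> t/2" using rearr_props[OF v t2] by (auto simp: b_def)
  from ae obtain N where N: "{x\<in>space M01. \<not> \<bar>w x\<bar> \<le> \<bar>u x\<bar> + \<bar>v x\<bar>} \<subseteq> N" "emeasure M01 N = 0" "N \<in> sets M01"
    by (rule AE_E)
  define U where "U = {x\<in>{0<..<1}. a < \<bar>u x\<bar>}"
  define V where "V = {x\<in>{0<..<1}. b < \<bar>v x\<bar>}"
  have UV: "U \<in> sets M01" "V \<in> sets M01" unfolding U_def V_def using sets_level u v by auto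
  have "distr_fun w (a+b) \<le> measure M01 (U \<union> V \<union> N)"
    by (rule distr_le_set) (use N UV in \<open>auto simp: U_def V_def\<close>)
  also have "\<dots> \<le> measure M01 (U \<union> V) + measure M01 N"
    by (rule M01_subadd) (use N UV in auto)
  also have "\<dots> \<le> measure M01 U + measure M01 V + measure M01 N"
    using M01_subadd[OF UV] by simp
  also have "measure M01 N = 0" using N by (simp add: measure_def)
  also have "measure M01 U = distr_fun u a" unfolding U_def distr_M01 ..
  also have "measure M01 V = distr_fun v b" unfolding V_def distr_M01 ..
  finally have "distr_fun w (a+b) \<le> t" using a b by simp
  then show ?thesis using rearr_le[of "a+b" w t] a b by (simp add: a_def b_def)
qed

lemma rearr_AE_bound:
  fixes g :: "real \<Rightarrow> real"
  assumes ae: "AE x in M01. \<bar>g x\<bar> \<le> C" and C: "0 \<le> C" and t: "0 < t"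
  shows "rearr g t \<le> C"
proof -
  from ae obtain N where N: "{x\<in>space M01. \<not> \<bar>g x\<bar> \<le> C} \<subseteq> N" "emeasure M01 N = 0" "N \<in> sets M01"
    by (rule AE_E)
  have "distr_fun g C \<le> measure M01 N"
    by (rule distr_le_set) (use N in auto)
  also have "measure M01 N = 0" using N by (simp add: measure_def)
  finally show ?thesis using t C by (intro rearr_le) auto
qed

lemma rearr_Linf:
  fixes g :: "real \<Rightarrow> real"
  assumes t: "0 < t"
  shows "ennreal (rearr g t) \<le> Linf_norm g"
  unfolding Linf_norm_def
  by (rule INF_greatest) (use rearr_AE_bound t in auto)

lemma rearr_mI:
  assumes t: "t \<in> {0<..<1}"
  shows "ennreal (I t * rearr g t) \<le> mI_norm I g"
  unfolding mI_norm_def by (rule SUP_upper[OF t])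

lemma rearr_pw_mono:
  fixes u w :: "real \<Rightarrow> real"
  assumes w: "w \<in> borel_measurable M01" and le: "\<And>x. x \<in> {0<..<1} \<Longrightarrow> \<bar>u x\<bar> \<le> \<bar>w x\<bar>"
    and t: "0 < t"
  shows "rearr u t \<le> rearr w t"
proof -
  have "distr_fun u (rearr w t) \<le> distr_fun w (rearr w t)"
    unfolding distr_M01[of w]
    by (rule distr_le_set[OF _ sets_level[OF w]]) (use le in force)
  also have "\<dots> \<le> t" using rearr_props[OF w t] by simp
  finally show ?thesis using rearr_props[OF w t] by (intro rearr_le) auto
qed

locale Ictx =
  fixes I :: "real \<Rightarrow> real"
  assumes Ipos: "\<And>t. t \<in> {0<..<1} \<Longrightarrow> 0 < I t"
    and Ile1: "\<And>t. t \<in> {0<..<1} \<Longrightarrow> I t \<le> 1"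
    and Imono: "\<And>s t. 0 < s \<Longrightarrow> s \<le> t \<Longrightarrow> t < 1 \<Longrightarrow> I s \<le> I t"
begin

definition Phi :: "(real \<Rightarrow> real) \<Rightarrow> real \<Rightarrow> real" where
  "Phi f x = (SUP s\<in>{0<..x}. I s * rearr f s)"

lemma SI_Phi: "SI I f x = Phi f x / I x"
  unfolding SI_def Phi_def ..

lemma mI_meas: "f \<in> mI I \<Longrightarrow> f \<in> borel_measurable M01"
  unfolding mI_def by auto

lemma mI_bound:
  assumes f: "f \<in> mI I" and r: "r \<in> {0<..<1}"
  shows "I r * rearr f r \<le> enn2real (mI_norm I f)"
proof -
  have fin: "mI_norm I f < \<infinity>" using f unfolding mI_def by auto
  have "0 \<le> I r * rearr f r" using Ipos[OF r] rearr_props(1)[OF mI_meas[OF f]] r by auto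
  moreover have "enn2real (ennreal (I r * rearr f r)) \<le> enn2real (mI_norm I f)"
    by (rule enn2real_mono[OF rearr_mI[OF r]]) (use fin in simp)
  ultimately show ?thesis by simp
qed

lemma Phi_bdd:
  assumes f: "f \<in> mI I" and x: "x < 1"
  shows "bdd_above ((\<lambda>s. I s * rearr f s) ` {0<..x})"
  by (rule bdd_aboveI[of _ "enn2real (mI_norm I f)"]) (use mI_bound[OF f] x in auto)

lemma Phi_upper:
  assumes f: "f \<in> mI I" and r: "0 < r" "r \<le> x" "x < 1"
  shows "I r * rearr f r \<le> Phi f x"
  unfolding Phi_def by (rule cSUP_upper[OF _ Phi_bdd[OF f r(3)]]) (use r in auto)

lemma Phi_least:
  assumes x: "0 < x" and B: "\<And>r. 0 < r \<Longrightarrow> r \<le> x \<Longrightarrow> I r * rearr f r \<le> B"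
  shows "Phi f x \<le> B"
  unfolding Phi_def by (rule cSUP_least) (use x B in auto)

lemma Phi_mono:
  assumes f: "f \<in> mI I" and xy: "0 < x" "x \<le> y" "y < 1"
  shows "Phi f x \<le> Phi f y"
  by (rule Phi_least[OF xy(1)]) (use Phi_upper[OF f] xy in auto)

lemma Phi_nonneg:
  assumes f: "f \<in> mI I" and x: "x \<in> {0<..<1}"
  shows "0 \<le> Phi f x"
proof -
  have "0 \<le> I x * rearr f x" using Ipos[OF x] rearr_props(1)[OF mI_meas[OF f]] x by auto
  also have "\<dots> \<le> Phi f x" using Phi_upper[OF f] x by auto
  finally show ?thesis .
qed

lemma SI_nonneg:
  assumes f: "f \<in> mI I" and x: "x \<in> {0<..<1}"
  shows "0 \<le> SI I f x"
  unfolding SI_Phi using Phi_nonneg[OF f x] Ipos[OF x] by simp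

lemma rearr_le_SI:
  assumes f: "f \<in> mI I" and x: "x \<in> {0<..<1}"
  shows "rearr f x \<le> SI I f x"
proof -
  have "I x * rearr f x \<le> Phi f x" using Phi_upper[OF f] x by auto
  then show ?thesis unfolding SI_Phi using Ipos[OF x] by (simp add: field_simps)
qed

lemma SI_le_left:
  assumes f: "f \<in> mI I" and x: "0 < x" "x \<le> t" "t < 1"
  shows "SI I f x \<le> Phi f t / I x"
  unfolding SI_Phi using Phi_mono[OF f x] Ipos[of x] x by (simp add: divide_right_mono)

lemma SI_le_right:
  assumes f: "f \<in> mI I" and x: "0 < t" "t \<le> x" "x < 1"
  shows "SI I f x \<le> SI I f t"
proof -
  have t: "t \<in> {0<..<1}" and xx: "x \<in> {0<..<1}" using x by auto
  have Ixt: "I t \<le> I x" using Imono x by auto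
  have g: "f \<in> borel_measurable M01" using mI_meas[OF f] .
  have "Phi f x \<le> I x * SI I f t"
  proof (rule Phi_least)
    show "0 < x" using x by simp
    fix r assume r: "0 < r" "r \<le> x"
    show "I r * rearr f r \<le> I x * SI I f t"
    proof (cases "r \<le> t")
      case True
      have "I r * rearr f r \<le> Phi f t" using Phi_upper[OF f] r True x by auto
      also have "\<dots> = I t * SI I f t" unfolding SI_Phi using Ipos[OF t] by simp
      also have "\<dots> \<le> I x * SI I f t" using Ixt SI_nonneg[OF f t] by (rule mult_right_mono)
      finally show ?thesis .
    next
      case False
      have "I r \<le> I x" using Imono r x by auto
      moreover have "rearr f r \<le> rearr f t" using rearr_antimono[OF g] False x by auto
      moreover have "0 \<le> rearr f r" using rearr_props(1)[OF g] r by auto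
      moreover have "0 \<le> I x" using Ipos[OF xx] by simp
      ultimately have "I r * rearr f r \<le> I x * rearr f t" by (intro mult_mono) auto
      also have "\<dots> \<le> I x * SI I f t" using rearr_le_SI[OF f t] Ipos[OF xx] by simp
      finally show ?thesis .
    qed
  qed
  then show ?thesis unfolding SI_Phi[of f x] using Ipos[OF xx] by (simp add: field_simps)
qed

end



context Ictx begin

lemma part1_general:
  fixes S :: "(real \<Rightarrow> real) \<Rightarrow> (real \<Rightarrow> real)" and c :: real
  assumes cpos: "0 < c" and dbl: "\<And>u. u \<in> {0<..<1/2} \<Longrightarrow> I (2*u) \<le> c * I u"
    and Ssub: "sublinear_on_mI I S"
    and SLinf: "bounded_on Linf_norm Linf S"
    and SmI: "bounded_on (mI_norm I) (mI I) S"
  shows "\<exists>C>0. \<forall>f\<in>mI I. \<forall>t\<in>{0<..<1}. rearr (S f) t \<le> C * SI I f t"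
proof -
  obtain C1 where C1: "\<And>f. f \<in> mI I \<Longrightarrow> S f \<in> mI I \<and> mI_norm I (S f) \<le> ennreal C1 * mI_norm I f"
    using SmI unfolding bounded_on_def by blast
  obtain C2 where C2: "\<And>f. f \<in> Linf \<Longrightarrow> S f \<in> Linf \<and> Linf_norm (S f) \<le> ennreal C2 * Linf_norm f"
    using SLinf unfolding bounded_on_def by blast
  define C1' where "C1' = max C1 0"
  define C2' where "C2' = max C2 0"
  have C1'0: "0 \<le> C1'" and C2'0: "0 \<le> C2'" by (auto simp: C1'_def C2'_def)
  have eC1: "ennreal C1 \<le> ennreal C1'" and eC2: "ennreal C2 \<le> ennreal C2'"
    by (auto simp: C1'_def C2'_def intro: ennreal_leI)
  have Smeas: "\<And>f. f \<in> mI I \<Longrightarrow> S f \<in> borel_measurable M01"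
    using Ssub unfolding sublinear_on_mI_def by blast
  have Sadd: "\<And>f g. f \<in> mI I \<Longrightarrow> g \<in> mI I \<Longrightarrow> AE x in M01. \<bar>S (\<lambda>y. f y + g y) x\<bar> \<le> \<bar>S f x\<bar> + \<bar>S g x\<bar>"
    using Ssub unfolding sublinear_on_mI_def by blast
  define C where "C = C1' * c + C2' + 1"
  have Cpos: "0 < C" unfolding C_def using C1'0 C2'0 cpos by (simp add: add_nonneg_pos)
  have main: "rearr (S f) t \<le> C * SI I f t" if f: "f \<in> mI I" and t: "t \<in> {0<..<1}" for f t
  proof -
    have fm: "f \<in> borel_measurable M01" using mI_meas[OF f] .
    define a where "a = rearr f t"
    have a0: "0 \<le> a" and adistr: "distr_fun f a \<le> t" using rearr_props[OF fm] t by (auto simp: a_def)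
    define h where "h = (\<lambda>y. max (-a) (min (f y) a))"
    define g where "g = (\<lambda>y. f y - h y)"
    have hm: "h \<in> borel_measurable M01" unfolding h_def using fm by measurable
    have gm: "g \<in> borel_measurable M01" unfolding g_def using fm hm by measurable
    have habs: "\<bar>h y\<bar> \<le> a" for y unfolding h_def using a0 by auto
    have gabs: "\<bar>g y\<bar> \<le> \<bar>f y\<bar>" for y unfolding g_def h_def using a0 by auto
    have glev: "0 < \<bar>g y\<bar> \<Longrightarrow> a < \<bar>f y\<bar>" for y unfolding g_def h_def using a0 by auto
    have hL: "Linf_norm h \<le> ennreal a"
      unfolding Linf_norm_def by (rule INF_lower) (use a0 habs in auto)
    have hLinf: "h \<in> Linf" unfolding Linf_def using hm le_less_trans[OF hL ennreal_less_top] by simp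
    have hmIn: "mI_norm I h \<le> ennreal a"
      unfolding mI_norm_def
    proof (rule SUP_least)
      fix s :: real assume s: "s \<in> {0<..<1}"
      have "distr_fun h a \<le> measure M01 {}" by (rule distr_le_set) (use habs in \<open>auto simp: not_less\<close>)
      then have "rearr h s \<le> a" using s a0 by (intro rearr_le) auto
      moreover have "0 \<le> rearr h s" using rearr_props(1)[OF hm] s by auto
      moreover have "0 < I s" "I s \<le> 1" using Ipos[OF s] Ile1[OF s] by auto
      ultimately have "I s * rearr h s \<le> 1 * rearr h s" by (intro mult_right_mono) auto
      then have "I s * rearr h s \<le> a" using \<open>rearr h s \<le> a\<close> by simp
      then show "ennreal (I s * rearr h s) \<le> ennreal a" by (rule ennreal_leI)
    qed
    have hmI: "h \<in> mI I" unfolding mI_def using hm le_less_trans[OF hmIn ennreal_less_top] by simp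
    have Phit0: "0 \<le> Phi f t" using Phi_nonneg[OF f t] .
    have gmIn: "mI_norm I g \<le> ennreal (Phi f t)"
      unfolding mI_norm_def
    proof (rule SUP_least)
      fix s :: real assume s: "s \<in> {0<..<1}"
      have Is: "0 < I s" using Ipos[OF s] .
      show "ennreal (I s * rearr g s) \<le> ennreal (Phi f t)"
      proof (rule ennreal_leI, cases "s \<le> t")
        case True
        have "rearr g s \<le> rearr f s" using rearr_pw_mono[OF fm] gabs s by auto
        then have "I s * rearr g s \<le> I s * rearr f s" using Is by simp
        also have "\<dots> \<le> Phi f t" using Phi_upper[OF f] s True t by auto
        finally show "I s * rearr g s \<le> Phi f t" .
      next
        case False
        have "distr_fun g 0 \<le> measure M01 {x\<in>{0<..<1}. a < \<bar>f x\<bar>}"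
          by (rule distr_le_set[OF _ sets_level[OF fm]]) (use glev in auto)
        also have "\<dots> = distr_fun f a" unfolding distr_M01 ..
        finally have "rearr g s \<le> 0" using adistr False by (intro rearr_le) auto
        then have "I s * rearr g s \<le> 0" using Is by (simp add: mult_nonneg_nonpos)
        then show "I s * rearr g s \<le> Phi f t" using Phit0 by linarith
      qed
    qed
    have gmI: "g \<in> mI I" unfolding mI_def using gm le_less_trans[OF gmIn ennreal_less_top] by simp
    have fgh: "f = (\<lambda>y. g y + h y)" unfolding g_def by simp
    have ae: "AE x in M01. \<bar>S f x\<bar> \<le> \<bar>S g x\<bar> + \<bar>S h x\<bar>"
      using Sadd[OF gmI hmI] fgh by simp
    have t0: "0 < t" and t1: "t < 1" using t by auto
    have sum: "rearr (S f) t \<le> rearr (S g) (t/2) + rearr (S h) (t/2)"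
      by (rule rearr_sum[OF Smeas[OF gmI] Smeas[OF hmI] ae t0])
    have t2: "t/2 \<in> {0<..<1}" using t by auto
    have It2: "0 < I (t/2)" using Ipos[OF t2] .
    have It: "0 < I t" using Ipos[OF t] .
    have dbl_t: "I t \<le> c * I (t/2)" using dbl[of "t/2"] t by auto
    have "ennreal (I (t/2) * rearr (S g) (t/2)) \<le> mI_norm I (S g)" by (rule rearr_mI[OF t2])
    also have "\<dots> \<le> ennreal C1 * mI_norm I g" using C1[OF gmI] by simp
    also have "\<dots> \<le> ennreal C1' * ennreal (Phi f t)" by (intro mult_mono eC1 gmIn) auto
    also have "\<dots> = ennreal (C1' * Phi f t)" using C1'0 Phit0 by (simp add: ennreal_mult)
    finally have Sg1: "I (t/2) * rearr (S g) (t/2) \<le> C1' * Phi f t"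
      using C1'0 Phit0 by (subst (asm) ennreal_le_iff) auto
    have "rearr (S g) (t/2) \<le> C1' * Phi f t / I (t/2)" using Sg1 It2 by (simp add: field_simps)
    also have "\<dots> \<le> C1' * Phi f t * c / I t"
    proof -
      have "1 / I (t/2) \<le> c / I t" using dbl_t It2 It by (simp add: field_simps)
      then have "C1' * Phi f t * (1 / I (t/2)) \<le> C1' * Phi f t * (c / I t)"
        using C1'0 Phit0 by (intro mult_left_mono) auto
      then show ?thesis by simp
    qed
    also have "\<dots> = C1' * c * SI I f t" unfolding SI_Phi by simp
    finally have Sg: "rearr (S g) (t/2) \<le> C1' * c * SI I f t" .
    have "ennreal (rearr (S h) (t/2)) \<le> Linf_norm (S h)" using rearr_Linf t by simp
    also have "\<dots> \<le> ennreal C2 * Linf_norm h" using C2[OF hLinf] by simp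
    also have "\<dots> \<le> ennreal C2' * ennreal a" by (intro mult_mono eC2 hL) auto
    also have "\<dots> = ennreal (C2' * a)" using C2'0 a0 by (simp add: ennreal_mult)
    finally have "rearr (S h) (t/2) \<le> C2' * a"
      using C2'0 a0 by (subst (asm) ennreal_le_iff) auto
    also have "\<dots> \<le> C2' * SI I f t" using rearr_le_SI[OF f t] C2'0 by (simp add: a_def mult_left_mono)
    finally have Sh: "rearr (S h) (t/2) \<le> C2' * SI I f t" .
    have SI0: "0 \<le> SI I f t" using SI_nonneg[OF f t] .
    have "rearr (S f) t \<le> C1' * c * SI I f t + C2' * SI I f t" using sum Sg Sh by linarith
    also have "\<dots> \<le> C * SI I f t" unfolding C_def using SI0 by (simp add: distrib_right)
    finally show ?thesis .
  qed
  show ?thesis using Cpos main by blast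
qed

end



lemma Ioo_M01: "0 \<le> a \<Longrightarrow> b \<le> 1 \<Longrightarrow> {a<..<b} \<in> sets M01"
  by (subst sets_restrict_space_iff) auto

context Ictx begin

lemma invI_meas:
  assumes t: "t \<le> 1"
  shows "(\<lambda>s. ennreal (1 / I s) * indicator {0<..<t} s) \<in> borel_measurable lborel"
proof -
  have "mono_on {0<..<t} (\<lambda>s. - (1 / I s))"
  proof (rule mono_onI)
    fix x y :: real assume xy: "x \<in> {0<..<t}" "y \<in> {0<..<t}" "x \<le> y"
    have "I x \<le> I y" "0 < I x" using Imono[of x y] Ipos[of x] xy t by auto
    then show "- (1 / I x) \<le> - (1 / I y)" by (simp add: frac_le)
  qed
  then have "(\<lambda>s. - (1 / I s)) \<in> borel_measurable (restrict_space borel {0<..<t})"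
    by (rule borel_measurable_mono_on_fnc)
  then have "(\<lambda>s. - (- (1 / I s))) \<in> borel_measurable (restrict_space borel {0<..<t})"
    by (rule borel_measurable_uminus)
  then have "(\<lambda>s. 1 / I s) \<in> borel_measurable (restrict_space borel {0<..<t})" by simp
  then have "(\<lambda>s. if s \<in> {0<..<t} then 1 / I s else 0) \<in> borel_measurable borel"
    by (subst (asm) measurable_restrict_space_iff) auto
  then have "(\<lambda>s. ennreal (if s \<in> {0<..<t} then 1 / I s else 0)) \<in> borel_measurable borel"
    by measurable
  moreover have "(\<lambda>s. ennreal (if s \<in> {0<..<t} then 1 / I s else 0)) = (\<lambda>s. ennreal (1 / I s) * indicator {0<..<t} s)"
    by (auto simp: indicator_def)
  ultimately show ?thesis by simp
qed

lemma rearr_SI_bound: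
  assumes f: "f \<in> mI I" and s: "0 < s" "s \<le> t" "t < 1"
  shows "rearr (SI I f) s \<le> SI I f t + Phi f t / I s"
proof -
  have tt: "t \<in> {0<..<1}" and ss: "s \<in> {0<..<1}" using s by auto
  have Is: "0 < I s" using Ipos[OF ss] .
  have P0: "0 \<le> Phi f t" using Phi_nonneg[OF f tt] .
  have S0: "0 \<le> SI I f t" using SI_nonneg[OF f tt] .
  define L where "L = SI I f t + Phi f t / I s"
  have L0: "0 \<le> L" unfolding L_def using P0 S0 Is by simp
  have sub: "{x\<in>{0<..<1}. L < \<bar>SI I f x\<bar>} \<subseteq> {0<..<s}"
  proof
    fix x assume x: "x \<in> {x\<in>{0<..<1}. L < \<bar>SI I f x\<bar>}"
    then have x01: "x \<in> {0<..<1}" and Lx: "L < SI I f x" using SI_nonneg[OF f] by auto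
    show "x \<in> {0<..<s}"
    proof (rule ccontr)
      assume "x \<notin> {0<..<s}"
      then have xs: "s \<le> x" using x01 by auto
      show False
      proof (cases "t \<le> x")
        case True
        then have "SI I f x \<le> SI I f t" using SI_le_right[OF f] s x01 by auto
        then show False using Lx P0 Is unfolding L_def by (smt (verit) divide_nonneg_pos)
      next
        case False
        then have "SI I f x \<le> Phi f t / I x" using SI_le_left[OF f] x01 s by auto
        also have "\<dots> \<le> Phi f t / I s" using P0 Is Imono[of s x] xs x01 s by (intro divide_left_mono) auto
        finally show False using Lx S0 unfolding L_def by linarith
      qed
    qed
  qed
  have "distr_fun (SI I f) L \<le> measure M01 {0<..<s}" by (rule distr_le_set[OF sub Ioo_M01]) (use s in auto)
  also have "\<dots> = s" using measure_M01_Ioo[of 0 s] s by simp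
  finally show ?thesis using L0 by (intro rearr_le) (auto simp: L_def)
qed

lemma part2_general:
  fixes S :: "(real \<Rightarrow> real) \<Rightarrow> (real \<Rightarrow> real)" and C0 D :: real
  assumes C0: "0 < C0" and P1: "\<And>f t. f \<in> mI I \<Longrightarrow> t \<in> {0<..<1} \<Longrightarrow> rearr (S f) t \<le> C0 * SI I f t"
    and Dh: "\<And>t. t \<in> {0<..<1} \<Longrightarrow> (\<integral>\<^sup>+ s \<in> {0<..<t}. ennreal (1 / I s) \<partial>lborel) \<le> ennreal (D * t / I t)"
  shows "\<exists>C>0. \<forall>f\<in>mI I. \<forall>t\<in>{0<..<1}. rearr_max (S f) t \<le> ennreal (C * SI I f t)
                              \<and> rearr_max (SI I f) t \<le> ennreal (C * SI I f t)"
proof -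
  define D' where "D' = max D 0"
  have D'0: "0 \<le> D'" by (simp add: D'_def)
  have Dh': "(\<integral>\<^sup>+ s. ennreal (1 / I s) * indicator {0<..<t} s \<partial>lborel) \<le> ennreal (D' * t / I t)"
    if t: "t \<in> {0<..<1}" for t
  proof -
    have "D * t / I t \<le> D' * t / I t" using Ipos[OF t] t by (auto simp: D'_def intro!: divide_right_mono mult_right_mono)
    then show ?thesis using Dh[OF t] by (metis ennreal_leI order_trans)
  qed
  define C where "C = C0 * D' + D' + 1"
  have Cpos: "0 < C" unfolding C_def using C0 D'0 by (simp add: add_nonneg_pos)
  have main: "rearr_max (S f) t \<le> ennreal (C * SI I f t) \<and> rearr_max (SI I f) t \<le> ennreal (C * SI I f t)"
    if f: "f \<in> mI I" and t: "t \<in> {0<..<1}" for f t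
  proof -
    have t0: "0 < t" and t1: "t < 1" using t by auto
    have It: "0 < I t" using Ipos[OF t] .
    have P0: "0 \<le> Phi f t" using Phi_nonneg[OF f t] .
    have S0: "0 \<le> SI I f t" using SI_nonneg[OF f t] .
    have PhiSI: "Phi f t = SI I f t * I t" unfolding SI_Phi using It by simp
    have im: "(\<lambda>s. ennreal (1 / I s) * indicator {0<..<t} s) \<in> borel_measurable lborel"
      using invI_meas t by auto


    have A1: "(\<integral>\<^sup>+ s \<in> {0<..<t}. ennreal (rearr (S f) s) \<partial>lborel)
        \<le> (\<integral>\<^sup>+ s. ennreal (C0 * Phi f t) * (ennreal (1 / I s) * indicator {0<..<t} s) \<partial>lborel)"
    proof (rule nn_integral_mono)
      fix s :: real
      show "ennreal (rearr (S f) s) * indicator {0<..<t} s \<le> ennreal (C0 * Phi f t) * (ennreal (1 / I s) * indicator {0<..<t} s)"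
      proof (cases "s \<in> {0<..<t}")
        case True
        then have ss: "s \<in> {0<..<1}" using t by auto
        have Is: "0 < I s" using Ipos[OF ss] .
        have "rearr (S f) s \<le> C0 * SI I f s" using P1[OF f ss] .
        also have "\<dots> \<le> C0 * (Phi f t / I s)" using SI_le_left[OF f] True t C0 by (intro mult_left_mono) auto
        also have "\<dots> = C0 * Phi f t * (1 / I s)" by simp
        finally have "ennreal (rearr (S f) s) \<le> ennreal (C0 * Phi f t * (1 / I s))" by (rule ennreal_leI)
        also have "\<dots> = ennreal (C0 * Phi f t) * ennreal (1 / I s)" using Is by (rule_tac ennreal_mult'') simp
        finally show ?thesis using True by simp
      qed simp
    qed
    also have "\<dots> = ennreal (C0 * Phi f t) * (\<integral>\<^sup>+ s. ennreal (1 / I s) * indicator {0<..<t} s \<partial>lborel)"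
      by (rule nn_integral_cmult[OF im])
    also have "\<dots> \<le> ennreal (C0 * Phi f t) * ennreal (D' * t / I t)"
      by (intro mult_left_mono Dh'[OF t]) auto
    also have "\<dots> = ennreal (C0 * D' * SI I f t * t)"
      using C0 P0 D'0 It t0 by (simp add: ennreal_mult[symmetric] PhiSI mult_ac)
    finally have A1': "(\<integral>\<^sup>+ s \<in> {0<..<t}. ennreal (rearr (S f) s) \<partial>lborel) \<le> ennreal (C0 * D' * SI I f t * t)" .
    have "rearr_max (S f) t \<le> ennreal (C0 * D' * SI I f t * t) / ennreal t"
      unfolding rearr_max_def by (rule divide_right_mono_ennreal[OF A1'])
    also have "\<dots> = ennreal (C0 * D' * SI I f t)"
      using t0 C0 D'0 S0 by (subst divide_ennreal) auto
    also have "\<dots> \<le> ennreal (C * SI I f t)"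
      using S0 D'0 by (intro ennreal_leI mult_right_mono) (auto simp: C_def)
    finally have R1: "rearr_max (S f) t \<le> ennreal (C * SI I f t)" .
    have A2: "(\<integral>\<^sup>+ s \<in> {0<..<t}. ennreal (rearr (SI I f) s) \<partial>lborel)
        \<le> (\<integral>\<^sup>+ s. ennreal (SI I f t) * indicator {0<..<t} s + ennreal (Phi f t) * (ennreal (1 / I s) * indicator {0<..<t} s) \<partial>lborel)"
    proof (rule nn_integral_mono)
      fix s :: real
      show "ennreal (rearr (SI I f) s) * indicator {0<..<t} s \<le> ennreal (SI I f t) * indicator {0<..<t} s + ennreal (Phi f t) * (ennreal (1 / I s) * indicator {0<..<t} s)"
      proof (cases "s \<in> {0<..<t}")
        case True
        then have ss: "s \<in> {0<..<1}" using t by auto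
        have Is: "0 < I s" using Ipos[OF ss] .
        have "rearr (SI I f) s \<le> SI I f t + Phi f t * (1 / I s)" using rearr_SI_bound[OF f] True t by auto
        then have "ennreal (rearr (SI I f) s) \<le> ennreal (SI I f t + Phi f t * (1 / I s))" by (rule ennreal_leI)
        also have "\<dots> = ennreal (SI I f t) + ennreal (Phi f t * (1 / I s))"
          using Is S0 P0 by (rule_tac ennreal_plus) auto
        also have "ennreal (Phi f t * (1 / I s)) = ennreal (Phi f t) * ennreal (1 / I s)"
          using Is by (rule_tac ennreal_mult'') simp
        finally show ?thesis using True by simp
      qed simp
    qed
    also have "\<dots> = ennreal (SI I f t) * emeasure lborel {0<..<t} + ennreal (Phi f t) * (\<integral>\<^sup>+ s. ennreal (1 / I s) * indicator {0<..<t} s \<partial>lborel)"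
      using im by (subst nn_integral_add) (auto simp: nn_integral_cmult nn_integral_cmult_indicator)
    also have "\<dots> \<le> ennreal (SI I f t) * ennreal t + ennreal (Phi f t) * ennreal (D' * t / I t)"
      using t0 by (intro add_mono mult_left_mono Dh'[OF t]) auto
    also have "\<dots> = ennreal ((1 + D') * SI I f t * t)"
      using S0 P0 D'0 It t0 by (simp add: ennreal_mult[symmetric] ennreal_plus[symmetric] PhiSI algebra_simps del: ennreal_plus)
    finally have A2': "(\<integral>\<^sup>+ s \<in> {0<..<t}. ennreal (rearr (SI I f) s) \<partial>lborel) \<le> ennreal ((1 + D') * SI I f t * t)" .
    have "rearr_max (SI I f) t \<le> ennreal ((1 + D') * SI I f t * t) / ennreal t"
      unfolding rearr_max_def by (rule divide_right_mono_ennreal[OF A2'])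
    also have "\<dots> = ennreal ((1 + D') * SI I f t)"
      using t0 D'0 S0 by (subst divide_ennreal) auto
    also have "\<dots> \<le> ennreal (C * SI I f t)"
      using S0 D'0 C0 by (intro ennreal_leI mult_right_mono) (auto simp: C_def)
    finally have R2: "rearr_max (SI I f) t \<le> ennreal (C * SI I f t)" .
    show ?thesis using R1 R2 by simp
  qed
  show ?thesis using Cpos main by blast
qed

end



lemma linear_sublinear:
  assumes "linear_on_mI I T"
  shows "sublinear_on_mI I T"
proof -
  have m: "\<forall>f\<in>mI I. T f \<in> borel_measurable M01" and
    l: "\<And>f g a b. f \<in> mI I \<Longrightarrow> g \<in> mI I \<Longrightarrow> AE x in M01. T (\<lambda>y. a * f y + b * g y) x = a * T f x + b * T g x"
    using assms unfolding linear_on_mI_def by auto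
  have add: "AE x in M01. \<bar>T (\<lambda>y. f y + g y) x\<bar> \<le> \<bar>T f x\<bar> + \<bar>T g x\<bar>" if "f \<in> mI I" "g \<in> mI I" for f g
    using l[OF that, of 1 1] by eventually_elim (simp add: abs_triangle_ineq)
  have hom: "AE x in M01. \<bar>T (\<lambda>y. a * f y) x\<bar> = \<bar>a\<bar> * \<bar>T f x\<bar>" if "f \<in> mI I" for f a
    using l[OF that that, of a 0] by eventually_elim (simp add: abs_mult)
  show ?thesis unfolding sublinear_on_mI_def using m add hom by blast
qed

lemma mono_meas_M01:
  fixes f :: "real \<Rightarrow> real"
  assumes mon: "mono_on {0<..<1} f"
  shows "f \<in> borel_measurable M01"
proof -
  have "space lborel = space lebesgue" "sets borel \<subseteq> sets lebesgue"
    by force+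
  then show ?thesis
    by (metis mon borel_measurable_mono_on_fnc borel_measurable_subalgebra mono_restrict_space space_lborel space_restrict_space)
qed

lemma rearr_meas:
  fixes g :: "real \<Rightarrow> real"
  assumes g: "g \<in> borel_measurable M01"
  shows "rearr g \<in> borel_measurable M01"
proof -
  have "mono_on {0<..<1} (\<lambda>x. - rearr g x)"
    by (rule mono_onI) (use rearr_antimono[OF g] in auto)
  then have "(\<lambda>x. - rearr g x) \<in> borel_measurable M01" by (rule mono_meas_M01)
  then have "(\<lambda>x. - (- rearr g x)) \<in> borel_measurable M01" by (rule borel_measurable_uminus)
  then show ?thesis by simp
qed

lemma distr_rearr:
  fixes g :: "real \<Rightarrow> real"
  assumes g: "g \<in> borel_measurable M01" and s: "0 \<le> s"
  shows "distr_fun (rearr g) s = distr_fun g s"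
proof -
  have "{x\<in>{0<..<1}. s < \<bar>rearr g x\<bar>} = {0<..<distr_fun g s}"
  proof -
    have "x \<in> {x\<in>{0<..<1}. s < \<bar>rearr g x\<bar>} \<longleftrightarrow> x \<in> {0<..<distr_fun g s}" for x
    proof (cases "x \<in> {0<..<1}")
      case True
      then have "\<bar>rearr g x\<bar> = rearr g x" using rearr_props(1)[OF g] by auto
      then show ?thesis using True rearr_gt_iff[OF g _ s, of x] by auto
    next
      case False
      then show ?thesis using distr_le1[of g s] by auto
    qed
    then show ?thesis by blast
  qed
  then show ?thesis unfolding distr_M01[of "rearr g"]
    using measure_M01_Ioo[of 0 "distr_fun g s"] distr_le1[of g s] distr_nonneg[of g s] by simp
qed

lemma fn_props:
  assumes "function_norm \<rho>"
  shows fn_hom: "\<And>f a. f \<in> NNmeas \<Longrightarrow> 0 \<le> a \<Longrightarrow> \<rho> (\<lambda>x. a * f x) = ennreal a * \<rho> f"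
    and fn_mono: "\<And>f g. f \<in> NNmeas \<Longrightarrow> g \<in> NNmeas \<Longrightarrow> (AE x in M01. g x \<le> f x) \<Longrightarrow> \<rho> g \<le> \<rho> f"
    and fn_ind: "\<And>E. E \<in> sets M01 \<Longrightarrow> \<rho> (indicator E) < \<infinity>"
  using assms unfolding function_norm_def by blast+

lemma NNmeasI: "f \<in> borel_measurable M01 \<Longrightarrow> (\<And>x. x \<in> {0<..<1} \<Longrightarrow> 0 \<le> f x) \<Longrightarrow> f \<in> NNmeas"
  unfolding NNmeas_def by auto

lemma Linf_sub_X:
  assumes fn: "function_norm \<rho>"
  shows "Linf \<subseteq> Xspace \<rho>"
proof
  fix f assume f: "f \<in> Linf"
  have fm: "f \<in> borel_measurable M01" using f unfolding Linf_def by auto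
  have "Linf_norm f < \<infinity>" using f unfolding Linf_def by auto
  then have "{C::real. 0 \<le> C \<and> (AE x in M01. \<bar>f x\<bar> \<le> C)} \<noteq> {}"
    unfolding Linf_norm_def by (metis INF_empty infinity_ennreal_def less_irrefl)
  then obtain C where C: "0 \<le> C" "AE x in M01. \<bar>f x\<bar> \<le> C" by auto
  define E :: "real set" where "E = {0<..<1}"
  have E: "E \<in> sets M01" unfolding E_def using Ioo_M01[of 0 1] by simp
  have indm: "indicator E \<in> NNmeas"
    by (rule NNmeasI) (use E in \<open>auto simp: borel_measurable_indicator\<close>)
  have absm: "(\<lambda>x. \<bar>f x\<bar>) \<in> NNmeas" by (rule NNmeasI) (use fm in auto)
  have Cm: "(\<lambda>x. C * indicator E x) \<in> NNmeas" by (rule NNmeasI) (use E C in \<open>auto simp: borel_measurable_indicator\<close>)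
  have "Xnorm \<rho> f = \<rho> (\<lambda>x. \<bar>f x\<bar>)" unfolding Xnorm_def ..
  also have "\<dots> \<le> \<rho> (\<lambda>x. C * indicator E x)"
    by (rule fn_mono[OF fn Cm absm]) (rule AE_mp[OF C(2)], rule AE_I2, auto simp: E_def indicator_def)
  also have "\<dots> = ennreal C * \<rho> (indicator E)" by (rule fn_hom[OF fn indm C(1)])
  also have "\<dots> < \<infinity>" using fn_ind[OF fn E] by (simp add: ennreal_mult_less_top)
  finally show "f \<in> Xspace \<rho>" unfolding Xspace_def using fm by auto
qed

context Ictx begin

lemma SI_meas:
  assumes f: "f \<in> mI I"
  shows "SI I f \<in> borel_measurable M01"
proof -
  have "mono_on {0<..<1} (Phi f)" by (rule mono_onI) (use Phi_mono[OF f] in auto)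
  then have P: "Phi f \<in> borel_measurable M01" by (rule mono_meas_M01)
  have "mono_on {0<..<1} I" by (rule mono_onI) (use Imono in auto)
  then have Im: "I \<in> borel_measurable M01" by (rule mono_meas_M01)
  have "(\<lambda>x. Phi f x / I x) \<in> borel_measurable M01" using P Im by (rule borel_measurable_divide)
  moreover have "SI I f = (\<lambda>x. Phi f x / I x)" using SI_Phi by auto
  ultimately show ?thesis by simp
qed

lemma part3_general:
  fixes c :: real and \<rho> :: "(real \<Rightarrow> real) \<Rightarrow> ennreal"
  assumes cpos: "0 < c" and dbl: "\<And>u. u \<in> {0<..<1/2} \<Longrightarrow> I (2*u) \<le> c * I u"
    and ri: "ri_norm \<rho>" and XmI: "Xspace \<rho> \<subseteq> mI I"
    and SIb: "bounded_on (Xnorm \<rho>) (Xspace \<rho>) (SI I)"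
  shows "Int_Linf_mI I \<rho>"
proof -
  have fn: "function_norm \<rho>" using ri unfolding ri_norm_def by auto
  have rinv: "\<And>f g. f \<in> NNmeas \<Longrightarrow> g \<in> NNmeas \<Longrightarrow> (\<forall>s\<ge>0. distr_fun f s = distr_fun g s) \<Longrightarrow> \<rho> f = \<rho> g"
    using ri unfolding ri_norm_def by blast
  obtain CS where CS: "\<And>f. f \<in> Xspace \<rho> \<Longrightarrow> SI I f \<in> Xspace \<rho> \<and> Xnorm \<rho> (SI I f) \<le> ennreal CS * Xnorm \<rho> f"
    using SIb unfolding bounded_on_def by blast
  define CS' where "CS' = max CS 0"
  have CS'0: "0 \<le> CS'" by (simp add: CS'_def)
  have eCS: "ennreal CS \<le> ennreal CS'" by (auto simp: CS'_def intro: ennreal_leI)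
  have Tb: "bounded_on (Xnorm \<rho>) (Xspace \<rho>) T"
    if lin: "linear_on_mI I T" and TL: "bounded_on Linf_norm Linf T" and TM: "bounded_on (mI_norm I) (mI I) T" for T
  proof -
    have sub: "sublinear_on_mI I T" by (rule linear_sublinear[OF lin])
    obtain CT where CT: "0 < CT" "\<And>f t. f \<in> mI I \<Longrightarrow> t \<in> {0<..<1} \<Longrightarrow> rearr (T f) t \<le> CT * SI I f t"
      using part1_general[OF cpos dbl sub TL TM] by blast
    have Tm: "\<And>f. f \<in> mI I \<Longrightarrow> T f \<in> borel_measurable M01" using lin unfolding linear_on_mI_def by blast
    have key: "T f \<in> Xspace \<rho> \<and> Xnorm \<rho> (T f) \<le> ennreal (CT * CS') * Xnorm \<rho> f" if fX: "f \<in> Xspace \<rho>" for f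
    proof -
      have f: "f \<in> mI I" using fX XmI by auto
      have Tfm: "T f \<in> borel_measurable M01" using Tm[OF f] .
      have SIm: "SI I f \<in> borel_measurable M01" using SI_meas[OF f] .
      have N1: "(\<lambda>x. \<bar>T f x\<bar>) \<in> NNmeas" by (rule NNmeasI) (use Tfm in auto)
      have N2: "rearr (T f) \<in> NNmeas" by (rule NNmeasI[OF rearr_meas[OF Tfm]]) (use rearr_props(1)[OF Tfm] in auto)
      have N3: "(\<lambda>x. CT * SI I f x) \<in> NNmeas" by (rule NNmeasI) (use SIm SI_nonneg[OF f] CT(1) in auto)
      have N4: "SI I f \<in> NNmeas" by (rule NNmeasI) (use SIm SI_nonneg[OF f] in auto)
      have N5: "(\<lambda>x. \<bar>SI I f x\<bar>) \<in> NNmeas" by (rule NNmeasI) (use SIm in auto)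
      have "Xnorm \<rho> (T f) = \<rho> (\<lambda>x. \<bar>T f x\<bar>)" unfolding Xnorm_def ..
      also have "\<dots> = \<rho> (rearr (T f))"
        by (rule rinv[OF N1 N2]) (use distr_rearr[OF Tfm] in \<open>auto simp: distr_fun_def[of "\<lambda>x. \<bar>T f x\<bar>"] distr_fun_def[of "T f"]\<close>)
      also have "\<dots> \<le> \<rho> (\<lambda>x. CT * SI I f x)"
        by (rule fn_mono[OF fn N3 N2]) (rule AE_I2, use CT(2)[OF f] in auto)
      also have "\<dots> = ennreal CT * \<rho> (SI I f)" using fn_hom[OF fn N4, of CT] CT(1) by simp
      also have "\<dots> \<le> ennreal CT * \<rho> (\<lambda>x. \<bar>SI I f x\<bar>)"
        by (intro mult_left_mono fn_mono[OF fn N5 N4]) auto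
      also have "\<rho> (\<lambda>x. \<bar>SI I f x\<bar>) = Xnorm \<rho> (SI I f)" unfolding Xnorm_def ..
      also have "ennreal CT * Xnorm \<rho> (SI I f) \<le> ennreal CT * (ennreal CS' * Xnorm \<rho> f)"
      proof (intro mult_left_mono)
        have "Xnorm \<rho> (SI I f) \<le> ennreal CS * Xnorm \<rho> f" using CS[OF fX] by simp
        also have "\<dots> \<le> ennreal CS' * Xnorm \<rho> f" using eCS by (rule mult_right_mono) simp
        finally show "Xnorm \<rho> (SI I f) \<le> ennreal CS' * Xnorm \<rho> f" .
      qed simp
      also have "\<dots> = ennreal (CT * CS') * Xnorm \<rho> f" using CT(1) CS'0 by (simp add: ennreal_mult mult.assoc)
      finally have B: "Xnorm \<rho> (T f) \<le> ennreal (CT * CS') * Xnorm \<rho> f" .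
      have "Xnorm \<rho> f < \<infinity>" using fX unfolding Xspace_def by auto
      then have "ennreal (CT * CS') * Xnorm \<rho> f < \<infinity>" by (simp add: ennreal_mult_less_top)
      then have "Xnorm \<rho> (T f) < \<infinity>" using B by (rule le_less_trans[rotated])
      then show ?thesis using B Tfm unfolding Xspace_def by auto
    qed
    show ?thesis unfolding bounded_on_def using key by blast
  qed
  show ?thesis unfolding Int_Linf_mI_def using Linf_sub_X[OF fn] XmI Tb by blast
qed

end


theorem theorem3p9:
  fixes I :: "real \<Rightarrow> real" and S :: "(real \<Rightarrow> real) \<Rightarrow> (real \<Rightarrow> real)"
  assumes I_bij: "bij_betw I {0<..<1} {0<..<1}"
    and I_incr: "strict_mono_on {0<..<1} I"
    and I_doubling: "\<exists>c>0. \<forall>t\<in>{0<..<1/2}. I (2*t) \<le> c * I t \<and> I t \<le> c * I (2*t)"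
    and S_sublinear: "sublinear_on_mI I S"
    and S_Linf: "bounded_on Linf_norm Linf S"
    and S_mI: "bounded_on (mI_norm I) (mI I) S"
  shows "(\<exists>C>0. \<forall>f\<in>mI I. (\<forall>x\<in>{0<..<1}. 0 \<le> f x) \<longrightarrow>
             (\<forall>t\<in>{0<..<1}. rearr (S f) t \<le> C * SI I f t))
       \<and> ((\<exists>D. \<forall>t\<in>{0<..<1}. (\<integral>\<^sup>+ s \<in> {0<..<t}. ennreal (1 / I s) \<partial>lborel) \<le> ennreal (D * t / I t))
          \<longrightarrow> (\<exists>C>0. \<forall>f\<in>mI I. (\<forall>x\<in>{0<..<1}. 0 \<le> f x) \<longrightarrow>
                (\<forall>t\<in>{0<..<1}. rearr_max (S f) t \<le> ennreal (C * SI I f t)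
                              \<and> rearr_max (SI I f) t \<le> ennreal (C * SI I f t))))
       \<and> (\<forall>\<rho>. ri_norm \<rho> \<and> Xspace \<rho> \<subseteq> mI I \<and> bounded_on (Xnorm \<rho>) (Xspace \<rho>) (SI I)
               \<longrightarrow> Int_Linf_mI I \<rho>)"
proof -
  interpret Ictx I
  proof
    fix t :: real assume t: "t \<in> {0<..<1}"
    have "I t \<in> {0<..<1}" using bij_betw_apply[OF I_bij t] .
    then show "0 < I t" "I t \<le> 1" by auto
  next
    fix s t :: real assume st: "0 < s" "s \<le> t" "t < 1"
    show "I s \<le> I t"
    proof (cases "s = t")
      case False
      then have "s < t" using st by simp
      have "I s < I t" by (rule strict_mono_onD[OF I_incr]) (use st \<open>s < t\<close> in auto)
      then show ?thesis by simp
    qed simp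
  qed
  obtain c where c: "0 < c" "\<forall>t\<in>{0<..<1/2}. I (2*t) \<le> c * I t \<and> I t \<le> c * I (2*t)"
    using I_doubling by blast
  have dbl: "\<And>u. u \<in> {0<..<1/2} \<Longrightarrow> I (2*u) \<le> c * I u" using c(2) by blast
  obtain C0 where C0: "0 < C0" "\<forall>f\<in>mI I. \<forall>t\<in>{0<..<1}. rearr (S f) t \<le> C0 * SI I f t"
    using part1_general[OF c(1) dbl S_sublinear S_Linf S_mI] by blast
  have P1: "\<exists>C>0. \<forall>f\<in>mI I. (\<forall>x\<in>{0<..<1}. 0 \<le> f x) \<longrightarrow>
             (\<forall>t\<in>{0<..<1}. rearr (S f) t \<le> C * SI I f t)"
    using C0 by blast
  have P2: "(\<exists>D. \<forall>t\<in>{0<..<1}. (\<integral>\<^sup>+ s \<in> {0<..<t}. ennreal (1 / I s) \<partial>lborel) \<le> ennreal (D * t / I t))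
          \<longrightarrow> (\<exists>C>0. \<forall>f\<in>mI I. (\<forall>x\<in>{0<..<1}. 0 \<le> f x) \<longrightarrow>
                (\<forall>t\<in>{0<..<1}. rearr_max (S f) t \<le> ennreal (C * SI I f t)
                              \<and> rearr_max (SI I f) t \<le> ennreal (C * SI I f t)))"
  proof
    assume "\<exists>D. \<forall>t\<in>{0<..<1}. (\<integral>\<^sup>+ s \<in> {0<..<t}. ennreal (1 / I s) \<partial>lborel) \<le> ennreal (D * t / I t)"
    then obtain D where D: "\<And>t. t \<in> {0<..<1} \<Longrightarrow> (\<integral>\<^sup>+ s \<in> {0<..<t}. ennreal (1 / I s) \<partial>lborel) \<le> ennreal (D * t / I t)"
      by blast
    obtain C where "0 < C" "\<forall>f\<in>mI I. \<forall>t\<in>{0<..<1}. rearr_max (S f) t \<le> ennreal (C * SI I f t)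
                              \<and> rearr_max (SI I f) t \<le> ennreal (C * SI I f t)"
      using part2_general[OF C0(1) _ D, of S] C0(2) by blast
    then show "\<exists>C>0. \<forall>f\<in>mI I. (\<forall>x\<in>{0<..<1}. 0 \<le> f x) \<longrightarrow>
                (\<forall>t\<in>{0<..<1}. rearr_max (S f) t \<le> ennreal (C * SI I f t)
                              \<and> rearr_max (SI I f) t \<le> ennreal (C * SI I f t))" by blast
  qed
  have P3: "\<forall>\<rho>. ri_norm \<rho> \<and> Xspace \<rho> \<subseteq> mI I \<and> bounded_on (Xnorm \<rho>) (Xspace \<rho>) (SI I)
               \<longrightarrow> Int_Linf_mI I \<rho>"
    using part3_general[OF c(1) dbl] by blast
  show ?thesis using P1 P2 P3 by blast
qed

end
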